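(* Let $G_1,G_2,\dots$ be i.i.d. $N(0,1)$ random variables and $\{\alpha_{jk}:j,k\ge1\}$ deterministic real numbers such that $\sum_{j,k=1}^{2n}\alpha_{jk}G_jG_k\to Z$ in probability as $n\to\infty$ for some finite random variable $Z$. If $\alpha_{11}\ne0$, then $Z$ has a continuous distribution, i.e. $P(Z=z)=0$ for every $z\in\mathbb R$. *)

theory Defs
  imports "HOL-Probability.Probability"
begin

definition conv_in_prob :: "'a measure \<Rightarrow> (nat \<Rightarrow> 'a \<Rightarrow> real) \<Rightarrow> ('a \<Rightarrow> real) \<Rightarrow> bool" where
  "conv_in_prob M X Z \<longleftrightarrow>
     (\<forall>e>0. (\<lambda>n. measure M {x \<in> space M. e \<le> \<bar>X n x - Z x\<bar>}) \<longlonglongrightarrow> 0)"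

end

theory Submission imports Defs "HOL-Computational_Algebra.Polynomial" begin
lemma quad_finite:
  fixes a b c z :: real assumes "a \<noteq> 0"
  shows "finite {g. a*g^2 + b*g + c = z}"
proof -
  have "[:c - z, b, a:] \<noteq> 0" using assms by simp
  then have "finite {g. poly [:c - z, b, a:] g = 0}" by (rule poly_roots_finite)
  moreover have "{g. a*g^2 + b*g + c = z} = {g. poly [:c - z, b, a:] g = 0}"
    by (auto simp: algebra_simps power2_eq_square)
  ultimately show ?thesis by simp
qed

lemma quad_rep:
  fixes \<alpha> :: "nat \<Rightarrow> nat \<Rightarrow> real"
  assumes "1 \<le> m"
  shows "(\<Sum>j=1..m. \<Sum>k=1..m. \<alpha> j k * (if j=1 then g else w j) * (if k=1 then g else w k))
     = \<alpha> 1 1 * g^2 + g * (\<Sum>k=2..m. \<alpha> 1 k * w k + \<alpha> k 1 * w k) + (\<Sum>j=2..m. \<Sum>k=2..m. \<alpha> j k * w j * w k)"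
proof -
  have s: "\<And>F. (\<Sum>j=1..m. F j) = F 1 + (\<Sum>j=2..m. F j)"
    using assms by (simp add: sum.atLeast_Suc_atMost numeral_2_eq_2)
  have i1: "(\<Sum>j=2..m. F j (if j=1 then g else w j)) = (\<Sum>j=2..m. F j (w j))" for F :: "nat \<Rightarrow> real \<Rightarrow> real"
    by (rule sum.cong) auto
  show ?thesis
    apply (simp only: s)
    apply (simp add: i1 sum.distrib sum_distrib_left sum_distrib_right algebra_simps power2_eq_square)
    done
qed

lemma quad_conv:
  fixes F :: "nat \<Rightarrow> real \<Rightarrow> real"
  assumes rep: "\<And>g k. k \<ge> 1 \<Longrightarrow> F k g = a*g^2 + b k * g + c k"
    and ne: "g1 \<noteq> g2" and c1: "convergent (\<lambda>k. F k g1)" and c2: "convergent (\<lambda>k. F k g2)"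
  shows "\<exists>B C. \<forall>g. (\<lambda>k. F k g) \<longlonglongrightarrow> a*g^2 + B*g + C"
proof -
  obtain L1 L2 where L1: "(\<lambda>k. F k g1) \<longlonglongrightarrow> L1" and L2: "(\<lambda>k. F k g2) \<longlonglongrightarrow> L2"
    using c1 c2 by (auto simp: convergent_def)
  define B where "B = (L1 - L2 - a*(g1^2 - g2^2)) / (g1 - g2)"
  define C where "C = L1 - a*g1^2 - B*g1"
  have eb: "\<forall>\<^sub>F k in sequentially. (F k g1 - F k g2 - a*(g1^2 - g2^2)) / (g1 - g2) = b k"
    using eventually_ge_at_top[of 1]
  proof (rule eventually_mono)
    fix k :: nat assume "1 \<le> k"
    then show "(F k g1 - F k g2 - a*(g1^2 - g2^2)) / (g1 - g2) = b k"
      using rep[of k g1] rep[of k g2] ne by (simp add: field_simps)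
  qed
  have tb: "(\<lambda>k. (F k g1 - F k g2 - a*(g1^2 - g2^2)) / (g1 - g2)) \<longlonglongrightarrow> B"
    unfolding B_def by (intro tendsto_intros L1 L2) (use ne in auto)
  have b: "b \<longlonglongrightarrow> B"
    using tb eb by (rule Lim_transform_eventually)
  have ec: "\<forall>\<^sub>F k in sequentially. F k g1 - a*g1^2 - b k * g1 = c k"
    using eventually_ge_at_top[of 1] by (rule eventually_mono) (simp add: rep)
  have c: "c \<longlonglongrightarrow> C"
  proof -
    have "(\<lambda>k. F k g1 - a*g1^2 - b k * g1) \<longlonglongrightarrow> C"
      unfolding C_def by (intro tendsto_intros L1 b)
    then show ?thesis using ec by (rule Lim_transform_eventually)
  qed
  have "(\<lambda>k. F k g) \<longlonglongrightarrow> a*g^2 + B*g + C" for g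
  proof -
    have "(\<lambda>k. a*g^2 + b k * g + c k) \<longlonglongrightarrow> a*g^2 + B*g + C"
      by (intro tendsto_intros b c)
    moreover have "\<forall>\<^sub>F k in sequentially. a*g^2 + b k * g + c k = F k g"
      using eventually_ge_at_top[of 1] by (rule eventually_mono) (simp add: rep)
    ultimately show ?thesis by (rule Lim_transform_eventually)
  qed
  then show ?thesis by blast
qed

lemma conv_in_prob_AE_subseq:
  assumes "prob_space M" and Xm: "\<And>n. X n \<in> borel_measurable M" and Zm: "Z \<in> borel_measurable M"
    and c: "conv_in_prob M X Z"
  shows "\<exists>s. strict_mono s \<and> (AE x in M. (\<lambda>k. X (s k) x) \<longlonglongrightarrow> Z x)"
proof -
  interpret prob_space M by fact
  have "\<forall>k. \<exists>N. \<forall>n\<ge>N. measure M {x \<in> space M. (1/2)^k \<le> \<bar>X n x - Z x\<bar>} < (1/2)^k"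
  proof
    fix k :: nat
    have "(\<lambda>n. measure M {x \<in> space M. (1/2)^k \<le> \<bar>X n x - Z x\<bar>}) \<longlonglongrightarrow> 0"
      using c unfolding conv_in_prob_def by simp
    from order_tendstoD(2)[OF this, of "(1/2)^k"]
    show "\<exists>N. \<forall>n\<ge>N. measure M {x \<in> space M. (1/2)^k \<le> \<bar>X n x - Z x\<bar>} < (1/2)^k"
      by (simp add: eventually_sequentially)
  qed
  then obtain N where N: "\<And>k n. n \<ge> N k \<Longrightarrow> measure M {x \<in> space M. (1/2)^k \<le> \<bar>X n x - Z x\<bar>} < (1/2)^k"
    by metis
  define s where "s k = k + (\<Sum>i\<le>k. N i)" for k
  have sm: "strict_mono s"
    by (rule strict_monoI_Suc) (simp add: s_def)
  have sN: "s k \<ge> N k" for k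
    unfolding s_def using member_le_sum[of k "{..k}" N] by simp
  define A where "A k = {x \<in> space M. (1/2)^k \<le> \<bar>X (s k) x - Z x\<bar>}" for k
  have Am[measurable]: "A k \<in> sets M" for k
    unfolding A_def using Xm Zm by measurable
  have Ab: "measure M (A k) < (1/2)^k" for k
    unfolding A_def using N[OF sN] .
  have Asum: "summable (\<lambda>k. measure M (A k))"
    by (rule summable_comparison_test'[of "\<lambda>k. (1/2::real)^k" 0])
       (use Ab in \<open>auto intro: less_imp_le simp: summable_geometric\<close>)
  have "AE x in M. eventually (\<lambda>n. x \<in> space M - A n) sequentially"
    by (rule borel_cantelli_AE1) (use Asum in \<open>auto simp: emeasure_eq_measure\<close>)
  then have "AE x in M. (\<lambda>k. X (s k) x) \<longlonglongrightarrow> Z x"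
  proof (rule eventually_mono)
    fix x assume ev: "eventually (\<lambda>n. x \<in> space M - A n) sequentially"
    have "(\<lambda>k. X (s k) x - Z x) \<longlonglongrightarrow> 0"
    proof (rule Lim_null_comparison)
      show "\<forall>\<^sub>F k in sequentially. norm (X (s k) x - Z x) \<le> (1/2)^k"
        using ev by (rule eventually_mono) (auto simp: A_def)
      show "(\<lambda>k. (1/2::real)^k) \<longlonglongrightarrow> 0" by (rule LIMSEQ_power_zero) simp
    qed
    then show "(\<lambda>k. X (s k) x) \<longlonglongrightarrow> Z x" by (simp add: LIM_zero_iff)
  qed
  with sm show ?thesis by blast
qed

theorem mainTheorem13:
  fixes M :: "'a measure" and G :: "nat \<Rightarrow> 'a \<Rightarrow> real"
    and \<alpha> :: "nat \<Rightarrow> nat \<Rightarrow> real" and Z :: "'a \<Rightarrow> real"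
  assumes "prob_space M"
    and "prob_space.indep_vars M (\<lambda>_. borel) G {1..}"
    and "\<And>j. j \<ge> 1 \<Longrightarrow> distributed M lborel (G j) std_normal_density"
    and "Z \<in> borel_measurable M"
    and "conv_in_prob M (\<lambda>n x. \<Sum>j=1..2*n. \<Sum>k=1..2*n. \<alpha> j k * G j x * G k x) Z"
    and "\<alpha> 1 1 \<noteq> 0"
  shows "\<forall>z::real. measure M {x \<in> space M. Z x = z} = 0"
proof
  fix z :: real
  interpret P: prob_space M by fact
  define S where "S = (PiM {2..} (\<lambda>_. borel) :: (nat \<Rightarrow> real) measure)"
  define T where "T = (PiM {1} (\<lambda>_. borel) :: (nat \<Rightarrow> real) measure)"
  define V where "V = (\<lambda>x. restrict (\<lambda>i. G i x) {2..})"
  define U where "U = (\<lambda>x. restrict (\<lambda>i. G i x) {1})"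
  define W where "W = (\<lambda>x. (V x, U x))"
  define h where "h = (\<lambda>(v::nat\<Rightarrow>real) (g::real) j. if j = 1 then g else if 2 \<le> j then v j else 0)"
  define hp where "hp = (\<lambda>j (p::(nat\<Rightarrow>real)\<times>(nat\<Rightarrow>real)). h (fst p) (snd p 1) j)"
  define f where "f = (\<lambda>n p. \<Sum>j=1..2*n. \<Sum>k=1..2*n. \<alpha> j k * hp j p * hp k p)"
  have Grv[measurable]: "G j \<in> borel_measurable M" if "j \<ge> 1" for j
    using distributed_measurable[OF assms(3)[OF that]] by simp
  have hm[measurable]: "hp j \<in> borel_measurable (S \<Otimes>\<^sub>M T)" for j
  proof -
    consider "j = 1" | "2 \<le> j" | "j = 0" by linarith
    then show ?thesis
    proof cases
      case 1
      then have "hp j = (\<lambda>p. snd p 1)" by (auto simp: hp_def h_def fun_eq_iff)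
      moreover have "(\<lambda>p. snd p 1) \<in> borel_measurable (S \<Otimes>\<^sub>M T)"
        unfolding T_def
        by (rule measurable_compose[OF measurable_snd measurable_component_singleton]) auto
      ultimately show ?thesis by simp
    next
      case 2
      then have "hp j = (\<lambda>p. fst p j)" by (auto simp: hp_def h_def fun_eq_iff)
      moreover have "(\<lambda>p. fst p j) \<in> borel_measurable (S \<Otimes>\<^sub>M T)"
        unfolding S_def
        by (rule measurable_compose[OF measurable_fst measurable_component_singleton]) (use 2 in auto)
      ultimately show ?thesis by simp
    next
      case 3 then show ?thesis by (simp add: hp_def h_def)
    qed
  qed
  have fm[measurable]: "f n \<in> borel_measurable (S \<Otimes>\<^sub>M T)" for n
    unfolding f_def by measurable
  have Vm[measurable]: "V \<in> measurable M S"
    unfolding V_def S_def by (rule measurable_restrict) auto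
  have Um[measurable]: "U \<in> measurable M T"
    unfolding U_def T_def by (rule measurable_restrict) auto
  have Wm[measurable]: "W \<in> measurable M (S \<Otimes>\<^sub>M T)"
    unfolding W_def by measurable
  have hW: "hp j (W x) = G j x" if "j \<ge> 1" for j x
    using that by (auto simp: hp_def h_def W_def V_def U_def)
  have Zn: "(\<Sum>j=1..2*n. \<Sum>k=1..2*n. \<alpha> j k * G j x * G k x) = f n (W x)" for n x
    unfolding f_def by (intro sum.cong) (auto simp: hW)
  have cp: "conv_in_prob M (\<lambda>n x. f n (W x)) Z"
    using assms(5) unfolding Zn .
  obtain s where sm: "strict_mono s" and ae: "AE x in M. (\<lambda>k. f (s k) (W x)) \<longlonglongrightarrow> Z x"
    using conv_in_prob_AE_subseq[OF assms(1) _ assms(4) cp] by auto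
  have ind: "P.indep_var S V T U"
    unfolding S_def V_def T_def U_def by (rule P.indep_var_restrict[OF assms(2)]) auto
  define Q where "Q = distr M S V"
  define N where "N = distr M T U"
  have dist: "distr M (S \<Otimes>\<^sub>M T) W = Q \<Otimes>\<^sub>M N"
    using ind unfolding P.indep_var_distribution_eq Q_def N_def W_def by simp
  interpret Q: prob_space Q unfolding Q_def by (rule P.prob_space_distr) simp
  interpret N: prob_space N unfolding N_def by (rule P.prob_space_distr) simp
  interpret QN: pair_prob_space Q N ..
  have Ndens: "distr M lborel (G 1) = density lborel std_normal_density"
    by (rule distributed_distr_eq_density[OF assms(3)]) simp
  have Nnull: "{u \<in> space N. u 1 = c} \<in> null_sets N" for c
  proof -
    have c1[measurable]: "(\<lambda>u. u 1) \<in> borel_measurable T"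
      unfolding T_def by (rule measurable_component_singleton) auto
    have sm: "{u \<in> space N. u 1 = c} \<in> sets N"
      unfolding N_def sets_distr space_distr by measurable
    have nl: "{c} \<in> null_sets lborel"
      by (auto simp: null_sets_def emeasure_lborel_countable)
    have "emeasure N {u \<in> space N. u 1 = c} = emeasure M (U -` {u \<in> space T. u 1 = c} \<inter> space M)"
      unfolding N_def space_distr by (rule emeasure_distr) measurable
    also have "U -` {u \<in> space T. u 1 = c} \<inter> space M = G 1 -` {c} \<inter> space M"
      using measurable_space[OF Um] by (auto simp: U_def)
    also have "emeasure M \<dots> = emeasure (distr M lborel (G 1)) {c}"
      by (rule emeasure_distr[symmetric]) auto
    also have "\<dots> = (\<integral>\<^sup>+ x. ennreal (std_normal_density x) * indicator {c} x \<partial>lborel)"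
      unfolding Ndens by (rule emeasure_density) auto
    also have "\<dots> = 0" by (rule nn_integral_null_set[OF nl])
    finally show ?thesis using sm unfolding null_sets_def by simp
  qed
  have sets_QN: "sets (Q \<Otimes>\<^sub>M N) = sets (S \<Otimes>\<^sub>M T)"
    by (metis dist sets_distr)
  have aeC: "AE p in Q \<Otimes>\<^sub>M N. convergent (\<lambda>k. f (s k) p)"
    unfolding dist[symmetric]
  proof (subst AE_distr_iff[OF Wm])
    show "{x \<in> space (S \<Otimes>\<^sub>M T). convergent (\<lambda>k. f (s k) x)} \<in> sets (S \<Otimes>\<^sub>M T)"
      unfolding Cauchy_convergent_iff[symmetric] by (rule sets_Collect_Cauchy) (rule fm)
    show "AE x in M. convergent (\<lambda>k. f (s k) (W x))"
      using ae by (auto simp: convergent_def elim!: eventually_mono)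
  qed
  have aeQ: "AE v in Q. AE u in N. convergent (\<lambda>k. f (s k) (v, u))"
    using QN.AE_pair[OF aeC] by simp
  define Phi where "Phi = (\<lambda>p. lim (\<lambda>k. f (s k) p))"
  have Phim[measurable]: "Phi \<in> borel_measurable (S \<Otimes>\<^sub>M T)"
    unfolding Phi_def by measurable
  define A where "A = {p \<in> space (S \<Otimes>\<^sub>M T). Phi p = z}"
  have Am: "A \<in> sets (S \<Otimes>\<^sub>M T)" unfolding A_def by measurable
  have sec0: "emeasure N (Pair v -` A) = 0"
    if conv: "AE u in N. convergent (\<lambda>k. f (s k) (v, u))" for v
  proof -
    have "\<exists>u. convergent (\<lambda>k. f (s k) (v, u))"
    proof (rule ccontr)
      assume "\<not> ?thesis"
      then have "AE g in N. False" using conv by simp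
      then show False by simp
    qed
    then obtain u1 where u1: "convergent (\<lambda>k. f (s k) (v, u1))" by blast
    have "AE u in N. u 1 \<noteq> u1 1"
      by (rule AE_I'[OF Nnull[of "u1 1"]]) auto
    with conv have ae2: "AE u in N. convergent (\<lambda>k. f (s k) (v, u)) \<and> u 1 \<noteq> u1 1"
      by eventually_elim auto
    have "\<exists>u. convergent (\<lambda>k. f (s k) (v, u)) \<and> u 1 \<noteq> u1 1"
    proof (rule ccontr)
      assume "\<not> ?thesis"
      then have "AE g in N. False" using ae2 by (rule_tac eventually_mono[OF ae2]) blast
      then show False by simp
    qed
    then obtain u2 where u2: "convergent (\<lambda>k. f (s k) (v, u2))" "u2 1 \<noteq> u1 1" by blast
    define w where "w = h v 0"
    define F where "F = (\<lambda>k g. f (s k) (v, (\<lambda>_. g)))"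
    have Fu: "f (s k) (v, u) = F k (u 1)" for k u
      by (simp add: F_def f_def hp_def)
    have hvg: "hp j (v, (\<lambda>_. g)) = (if j = 1 then g else w j)" for j g
      by (simp add: hp_def h_def w_def)
    have rep: "F k g = \<alpha> 1 1 * g^2 + (\<Sum>j=2..2 * s k. \<alpha> 1 j * w j + \<alpha> j 1 * w j) * g
        + (\<Sum>j=2..2 * s k. \<Sum>i=2..2 * s k. \<alpha> j i * w j * w i)" if "k \<ge> 1" for k g
    proof -
      have "1 \<le> 2 * s k" using seq_suble[OF sm, of k] that by linarith
      then show ?thesis unfolding F_def f_def hvg by (subst quad_rep) (auto simp: algebra_simps)
    qed
    obtain B C where BC: "\<And>g. (\<lambda>k. F k g) \<longlonglongrightarrow> \<alpha> 1 1 * g^2 + B*g + C"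
      using quad_conv[where F=F, OF rep, of "u2 1" "u1 1"] u1 u2 by (auto simp: Fu)
    define R where "R = {g. \<alpha> 1 1 * g^2 + B*g + C = z}"
    have fin: "finite R"
      unfolding R_def by (rule quad_finite[OF assms(6)])
    have sub: "Pair v -` A \<subseteq> (\<Union>r\<in>R. {u \<in> space N. u 1 = r})"
    proof
      fix u assume "u \<in> Pair v -` A"
      then have "(v, u) \<in> space (S \<Otimes>\<^sub>M T)" "Phi (v, u) = z" by (auto simp: A_def)
      moreover have "Phi (v, u) = \<alpha> 1 1 * (u 1)^2 + B*(u 1) + C"
        unfolding Phi_def Fu using BC by (rule limI)
      moreover have "space N = space T" by (simp add: N_def)
      ultimately show "u \<in> (\<Union>r\<in>R. {u \<in> space N. u 1 = r})"
        by (auto simp: R_def space_pair_measure)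
    qed
    have "(\<Union>r\<in>R. {u \<in> space N. u 1 = r}) \<in> null_sets N"
      using fin Nnull by (intro null_sets.finite_UN) auto
    moreover have "Pair v -` A \<in> sets N"
      using Am by (simp add: N_def sets_Pair1)
    ultimately have "Pair v -` A \<in> null_sets N"
      using sub null_sets_subset by blast
    then show ?thesis by auto
  qed
  have "emeasure (Q \<Otimes>\<^sub>M N) A = (\<integral>\<^sup>+ v. emeasure N (Pair v -` A) \<partial>Q)"
    by (rule N.emeasure_pair_measure_alt) (use Am sets_QN in simp)
  also have "\<dots> = (\<integral>\<^sup>+ v. 0 \<partial>Q)"
    by (rule nn_integral_cong_AE) (use aeQ sec0 in \<open>auto elim!: eventually_mono\<close>)
  finally have A0: "emeasure (Q \<Otimes>\<^sub>M N) A = 0" by simp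
  have aeZ: "AE x in M. Z x = Phi (W x)"
    using ae by (auto simp: Phi_def limI elim!: eventually_mono)
  have "measure M {x \<in> space M. Z x = z} = measure M {x \<in> space M. Phi (W x) = z}"
    by (rule measure_eq_AE) (use aeZ assms(4) in \<open>auto elim!: eventually_mono\<close>)
  also have "\<dots> = measure (distr M (S \<Otimes>\<^sub>M T) W) A"
  proof -
    have "W -` A \<inter> space M = {x \<in> space M. Phi (W x) = z}"
      using measurable_space[OF Wm] by (auto simp: A_def)
    then show ?thesis by (simp add: measure_distr[OF Wm Am])
  qed
  also have "\<dots> = 0" using A0 by (simp add: dist measure_def)
  finally show "measure M {x \<in> space M. Z x = z} = 0" .
qed

end
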